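(* Let $(A,\mu,\alpha,\beta)$ be a BiHom-Novikov algebra and let $\tilde\alpha,\tilde\beta:A\to A$ be two morphisms of BiHom-Novikov algebras (from $A$ to itself) such that any two of the maps $\alpha,\beta,\tilde\alpha,\tilde\beta$ commute. Then $(A,\mu\circ(\tilde\alpha\otimes\tilde\beta),\alpha\circ\tilde\alpha,\beta\circ\tilde\beta)$ is also a BiHom-Novikov algebra.
   Context: Work over a field. A BiHom-Novikov algebra is a 4-tuple $(A,\mu,\alpha,\beta)$ with $\mu:A\otimes A\to A$ (written $x\cdot y$) and commuting linear maps $\alpha,\beta:A\to A$ such that for all $x,y,z\in A$: $\alpha(x\cdot y)=\alpha(x)\cdot\alpha(y)$, $\beta(x\cdot y)=\beta(x)\cdot\beta(y)$, $(\beta(x)\cdot\alpha(y))\cdot\beta(z)-\alpha\beta(x)\cdot(\alpha(y)\cdot z)=(\beta(y)\cdot\alpha(x))\cdot\beta(z)-\alpha\beta(y)\cdot(\alpha(x)\cdot z)$, and $(x\cdot\beta(y))\cdot\alpha\beta(z)=(x\cdot\beta(z))\cdot\alpha\beta(y)$. A morphism $f:(A,\mu_A,\alpha_A,\beta_A)\to(B,\mu_B,\alpha_B,\beta_B)$ of BiHom-Novikov algebras is a linear map with $\alpha_B f=f\alpha_A$, $\beta_B f=f\beta_A$ and $f\circ\mu_A=\mu_B\circ(f\otimes f)$. *)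

theory Defs
  imports Complex_Main
begin

text \<open>A vector space over a field 'k with carrier type 'a and scalar multiplication sc.
  The multiplication mu is bilinear (mu corresponds to a linear map A tensor A to A).\<close>

definition bilinear_map :: "('k::field \<Rightarrow> 'a::ab_group_add \<Rightarrow> 'a) \<Rightarrow> ('a \<Rightarrow> 'a \<Rightarrow> 'a) \<Rightarrow> bool" where
  "bilinear_map sc mu \<longleftrightarrow> (\<forall>x. Vector_Spaces.linear sc sc (mu x)) \<and> (\<forall>y. Vector_Spaces.linear sc sc (\<lambda>x. mu x y))"

definition BiHom_Novikov :: "('k::field \<Rightarrow> 'a::ab_group_add \<Rightarrow> 'a) \<Rightarrow> ('a \<Rightarrow> 'a \<Rightarrow> 'a) \<Rightarrow> ('a \<Rightarrow> 'a) \<Rightarrow> ('a \<Rightarrow> 'a) \<Rightarrow> bool" where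
  "BiHom_Novikov sc mu \<alpha> \<beta> \<longleftrightarrow>
     vector_space sc \<and> bilinear_map sc mu \<and>
     Vector_Spaces.linear sc sc \<alpha> \<and> Vector_Spaces.linear sc sc \<beta> \<and>
     \<alpha> \<circ> \<beta> = \<beta> \<circ> \<alpha> \<and>
     (\<forall>x y. \<alpha> (mu x y) = mu (\<alpha> x) (\<alpha> y)) \<and>
     (\<forall>x y. \<beta> (mu x y) = mu (\<beta> x) (\<beta> y)) \<and>
     (\<forall>x y z. mu (mu (\<beta> x) (\<alpha> y)) (\<beta> z) - mu (\<alpha> (\<beta> x)) (mu (\<alpha> y) z)
             = mu (mu (\<beta> y) (\<alpha> x)) (\<beta> z) - mu (\<alpha> (\<beta> y)) (mu (\<alpha> x) z)) \<and>
     (\<forall>x y z. mu (mu x (\<beta> y)) (\<alpha> (\<beta> z)) = mu (mu x (\<beta> z)) (\<alpha> (\<beta> y)))"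

definition BiHom_Novikov_morphism ::
  "('k::field \<Rightarrow> 'a::ab_group_add \<Rightarrow> 'a) \<Rightarrow> ('a \<Rightarrow> 'a \<Rightarrow> 'a) \<Rightarrow> ('a \<Rightarrow> 'a) \<Rightarrow> ('a \<Rightarrow> 'a) \<Rightarrow>
   ('k \<Rightarrow> 'b::ab_group_add \<Rightarrow> 'b) \<Rightarrow> ('b \<Rightarrow> 'b \<Rightarrow> 'b) \<Rightarrow> ('b \<Rightarrow> 'b) \<Rightarrow> ('b \<Rightarrow> 'b) \<Rightarrow>
   ('a \<Rightarrow> 'b) \<Rightarrow> bool" where
  "BiHom_Novikov_morphism scA muA alA beA scB muB alB beB f \<longleftrightarrow>
     Vector_Spaces.linear scA scB f \<and> alB \<circ> f = f \<circ> alA \<and> beB \<circ> f = f \<circ> beA \<and>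
     (\<forall>x y. f (muA x y) = muB (f x) (f y))"

end

theory Submission
  imports Defs
begin

theorem proposition2p3:
  fixes sc :: "'k::field \<Rightarrow> 'a::ab_group_add \<Rightarrow> 'a"
    and mu :: "'a \<Rightarrow> 'a \<Rightarrow> 'a" and \<alpha> \<beta> \<alpha>' \<beta>' :: "'a \<Rightarrow> 'a"
  assumes "BiHom_Novikov sc mu \<alpha> \<beta>"
    and "BiHom_Novikov_morphism sc mu \<alpha> \<beta> sc mu \<alpha> \<beta> \<alpha>'"
    and "BiHom_Novikov_morphism sc mu \<alpha> \<beta> sc mu \<alpha> \<beta> \<beta>'"
    and "\<alpha> \<circ> \<alpha>' = \<alpha>' \<circ> \<alpha>" and "\<alpha> \<circ> \<beta>' = \<beta>' \<circ> \<alpha>"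
    and "\<beta> \<circ> \<alpha>' = \<alpha>' \<circ> \<beta>" and "\<beta> \<circ> \<beta>' = \<beta>' \<circ> \<beta>"
    and "\<alpha>' \<circ> \<beta>' = \<beta>' \<circ> \<alpha>'" and "\<alpha> \<circ> \<beta> = \<beta> \<circ> \<alpha>"
  shows "BiHom_Novikov sc (\<lambda>x y. mu (\<alpha>' x) (\<beta>' y)) (\<alpha> \<circ> \<alpha>') (\<beta> \<circ> \<beta>')"
proof -
  have c1: "\<alpha>' (\<alpha> x) = \<alpha> (\<alpha>' x)" for x using assms(4) by (metis comp_apply)
  have c2: "\<beta>' (\<alpha> x) = \<alpha> (\<beta>' x)" for x using assms(5) by (metis comp_apply)
  have c3: "\<alpha>' (\<beta> x) = \<beta> (\<alpha>' x)" for x using assms(6) by (metis comp_apply)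
  have c4: "\<beta>' (\<beta> x) = \<beta> (\<beta>' x)" for x using assms(7) by (metis comp_apply)
  have c5: "\<beta>' (\<alpha>' x) = \<alpha>' (\<beta>' x)" for x using assms(8) by (metis comp_apply)
  have c6: "\<beta> (\<alpha> x) = \<alpha> (\<beta> x)" for x using assms(9) by (metis comp_apply)
  note C = c1 c2 c3 c4 c5 c6
  from assms(1) have vs: "vector_space sc" and bl: "bilinear_map sc mu"
    and la: "Vector_Spaces.linear sc sc \<alpha>" and lb: "Vector_Spaces.linear sc sc \<beta>"
    and ma: "\<And>x y. \<alpha> (mu x y) = mu (\<alpha> x) (\<alpha> y)"
    and mb: "\<And>x y. \<beta> (mu x y) = mu (\<beta> x) (\<beta> y)"
    and N1: "\<And>x y z. mu (mu (\<beta> x) (\<alpha> y)) (\<beta> z) - mu (\<alpha> (\<beta> x)) (mu (\<alpha> y) z)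
             = mu (mu (\<beta> y) (\<alpha> x)) (\<beta> z) - mu (\<alpha> (\<beta> y)) (mu (\<alpha> x) z)"
    and N2: "\<And>x y z. mu (mu x (\<beta> y)) (\<alpha> (\<beta> z)) = mu (mu x (\<beta> z)) (\<alpha> (\<beta> y))"
    unfolding BiHom_Novikov_def by auto
  from assms(2) have la': "Vector_Spaces.linear sc sc \<alpha>'"
    and ma': "\<And>x y. \<alpha>' (mu x y) = mu (\<alpha>' x) (\<alpha>' y)"
    unfolding BiHom_Novikov_morphism_def by auto
  from assms(3) have lb': "Vector_Spaces.linear sc sc \<beta>'"
    and mb': "\<And>x y. \<beta>' (mu x y) = mu (\<beta>' x) (\<beta>' y)"
    unfolding BiHom_Novikov_morphism_def by auto
  have bl': "bilinear_map sc (\<lambda>x y. mu (\<alpha>' x) (\<beta>' y))"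
    unfolding bilinear_map_def
  proof safe
    fix x
    have "Vector_Spaces.linear sc sc (mu (\<alpha>' x) \<circ> \<beta>')"
      using bl lb' unfolding bilinear_map_def by (blast intro: Vector_Spaces.linear_compose)
    thus "Vector_Spaces.linear sc sc (\<lambda>y. mu (\<alpha>' x) (\<beta>' y))" by (simp add: comp_def)
  next
    fix y
    have "Vector_Spaces.linear sc sc ((\<lambda>x. mu x (\<beta>' y)) \<circ> \<alpha>')"
      using bl la' unfolding bilinear_map_def by (blast intro: Vector_Spaces.linear_compose)
    thus "Vector_Spaces.linear sc sc (\<lambda>x. mu (\<alpha>' x) (\<beta>' y))" by (simp add: comp_def)
  qed
  have lin1: "Vector_Spaces.linear sc sc (\<alpha> \<circ> \<alpha>')" using la' la by (rule Vector_Spaces.linear_compose)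
  have lin2: "Vector_Spaces.linear sc sc (\<beta> \<circ> \<beta>')" using lb' lb by (rule Vector_Spaces.linear_compose)
  have com: "(\<alpha> \<circ> \<alpha>') \<circ> (\<beta> \<circ> \<beta>') = (\<beta> \<circ> \<beta>') \<circ> (\<alpha> \<circ> \<alpha>')"
    by (rule ext) (simp add: C)
  have n1: "mu (\<alpha>' (mu (\<alpha>' ((\<beta> \<circ> \<beta>') x)) (\<beta>' ((\<alpha> \<circ> \<alpha>') y)))) (\<beta>' ((\<beta> \<circ> \<beta>') z)) -
            mu (\<alpha>' ((\<alpha> \<circ> \<alpha>') ((\<beta> \<circ> \<beta>') x))) (\<beta>' (mu (\<alpha>' ((\<alpha> \<circ> \<alpha>') y)) (\<beta>' z))) =
            mu (\<alpha>' (mu (\<alpha>' ((\<beta> \<circ> \<beta>') y)) (\<beta>' ((\<alpha> \<circ> \<alpha>') x)))) (\<beta>' ((\<beta> \<circ> \<beta>') z)) -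
            mu (\<alpha>' ((\<alpha> \<circ> \<alpha>') ((\<beta> \<circ> \<beta>') y))) (\<beta>' (mu (\<alpha>' ((\<alpha> \<circ> \<alpha>') x)) (\<beta>' z)))" for x y z
    using N1[of "\<alpha>' (\<alpha>' (\<beta>' x))" "\<alpha>' (\<alpha>' (\<beta>' y))" "\<beta>' (\<beta>' z)"]
    by (simp add: C ma' mb')
  have n2: "mu (\<alpha>' (mu (\<alpha>' x) (\<beta>' ((\<beta> \<circ> \<beta>') y)))) (\<beta>' ((\<alpha> \<circ> \<alpha>') ((\<beta> \<circ> \<beta>') z))) =
            mu (\<alpha>' (mu (\<alpha>' x) (\<beta>' ((\<beta> \<circ> \<beta>') z)))) (\<beta>' ((\<alpha> \<circ> \<alpha>') ((\<beta> \<circ> \<beta>') y)))" for x y z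
    using N2[of "\<alpha>' (\<alpha>' x)" "\<alpha>' (\<beta>' (\<beta>' y))" "\<alpha>' (\<beta>' (\<beta>' z))"]
    by (simp add: C ma' mb')
  have m1: "(\<alpha> \<circ> \<alpha>') (mu (\<alpha>' x) (\<beta>' y)) = mu (\<alpha>' ((\<alpha> \<circ> \<alpha>') x)) (\<beta>' ((\<alpha> \<circ> \<alpha>') y))" for x y
    by (simp add: C ma ma')
  have m2: "(\<beta> \<circ> \<beta>') (mu (\<alpha>' x) (\<beta>' y)) = mu (\<alpha>' ((\<beta> \<circ> \<beta>') x)) (\<beta>' ((\<beta> \<circ> \<beta>') y))" for x y
    by (simp add: C mb mb')
  show ?thesis unfolding BiHom_Novikov_def
    using vs bl' lin1 lin2 com m1 m2 n1 n2 by blast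
qed

end
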